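(* In the planted $k$-factor model, for every $\ell\in\{0,1,\dots,kn/2\}$ let $Z_\ell(H^*,G)$ be the number of $H\in\mathcal H$ with $|H\cap H^*|=\ell$ and $H\subseteq E(G)$. Then $$\mathbb E[Z_\ell(H^*,G)]\le (nkp)^{kn/2-\ell}.$$
   Context: Planted $k$-factor model: fix an integer $k\ge1$ and $n$ with $kn$ even. A $k$-factor on $[n]$ is a $k$-regular simple graph with vertex set $[n]$, identified with its edge set; $\mathcal H$ is the set of all $k$-factors on $[n]$. Let $p\in[0,1]$. Draw $H^*$ uniformly at random from $\mathcal H$ and, independently, $G_0\sim\mathcal G(n,p)$ (each of the $\binom n2$ vertex pairs is an edge independently with probability $p$). The observed graph is $G=G_0\cup H^*$. *)

theory Defs
  imports "HOL-Probability.Probability"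
begin

text \<open>Vertex set [n] is rendered as {0..<n}; an edge is a 2-element subset of it.\<close>

definition all_pairs :: "nat \<Rightarrow> nat set set" where
  "all_pairs n = {e. e \<subseteq> {0..<n} \<and> card e = 2}"

definition is_k_factor :: "nat \<Rightarrow> nat \<Rightarrow> nat set set \<Rightarrow> bool" where
  "is_k_factor n k H \<longleftrightarrow> H \<subseteq> all_pairs n \<and> (\<forall>v\<in>{0..<n}. card {e\<in>H. v \<in> e} = k)"

definition k_factors :: "nat \<Rightarrow> nat \<Rightarrow> nat set set set" where
  "k_factors n k = {H. is_k_factor n k H}"

definition gnp :: "nat \<Rightarrow> real \<Rightarrow> nat set set pmf" where
  "gnp n p = map_pmf (\<lambda>X. {e \<in> all_pairs n. X e})
              (Pi_pmf (all_pairs n) False (\<lambda>_. bernoulli_pmf p))"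

definition planted_pmf :: "nat \<Rightarrow> nat \<Rightarrow> real \<Rightarrow> (nat set set \<times> nat set set) pmf" where
  "planted_pmf n k p = pair_pmf (pmf_of_set (k_factors n k)) (gnp n p)"

definition Z_count :: "nat \<Rightarrow> nat \<Rightarrow> nat \<Rightarrow> nat set set \<Rightarrow> nat set set \<Rightarrow> nat" where
  "Z_count n k l Hs G = card {H \<in> k_factors n k. card (H \<inter> Hs) = l \<and> H \<subseteq> G}"

end

theory Submission
  imports Defs
begin

definition deg :: "nat set set \<Rightarrow> nat \<Rightarrow> nat" where
  "deg F v = card {x\<in>F. v \<in> x}"

lemma finite_all_pairs[simp]: "finite (all_pairs n)"
  unfolding all_pairs_def by (rule finite_subset[of _ "Pow {0..<n}"]) auto

definition Sdeg :: "nat \<Rightarrow> nat \<Rightarrow> (nat \<Rightarrow> nat) \<Rightarrow> nat set set set" where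
  "Sdeg n e d = {F. F \<subseteq> all_pairs n \<and> card F = e \<and> (\<forall>v<n. deg F v = d v)}"

lemma finite_Sdeg[simp]: "finite (Sdeg n e d)"
  unfolding Sdeg_def by (rule finite_subset[of _ "Pow (all_pairs n)"]) auto

lemma card_Sdeg: "card (Sdeg n e d) \<le> 2^e * fact e"
proof (induction e arbitrary: d)
  case 0
  have "Sdeg n 0 d \<subseteq> {{}}" unfolding Sdeg_def
    by (auto dest: finite_subset[OF _ finite_all_pairs])
  then have "card (Sdeg n 0 d) \<le> card {{}::nat set set}" by (intro card_mono) auto
  then show ?case by simp
next
  case (Suc e)
  show ?case
  proof (cases "Sdeg n (Suc e) d = {}")
    case True then show ?thesis by simp
  next
    case False
    then obtain F0 where F0: "F0 \<in> Sdeg n (Suc e) d" by blast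
    then have F0sub: "F0 \<subseteq> all_pairs n" and cF0: "card F0 = Suc e"
      and dF0: "\<And>v. v<n \<Longrightarrow> deg F0 v = d v" unfolding Sdeg_def by auto
    have finF0: "finite F0" using finite_subset[OF F0sub finite_all_pairs] .
    then obtain x0 where x0: "x0 \<in> F0" using cF0 by (metis card.empty ex_in_conv nat.distinct(1))
    then have "x0 \<in> all_pairs n" using F0sub by auto
    then obtain a b where ab: "x0 = {a,b}" "a \<noteq> b" "x0 \<subseteq> {0..<n}"
      unfolding all_pairs_def by (auto simp: card_2_iff)
    have "deg F0 a > 0" unfolding deg_def using x0 ab finF0
      by (subst card_gt_0_iff) auto
    then have ex: "\<exists>v. v<n \<and> d v > 0" using dF0[of a] ab by auto
    define v where "v = (LEAST v. v<n \<and> d v > 0)"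
    have v: "v < n" "d v > 0" using LeastI_ex[OF ex] unfolding v_def by auto
    define W where "W = {w. w<n \<and> w \<noteq> v \<and> d w > 0}"
    define d' where "d' w = (\<lambda>u. d u - (if u = v \<or> u = w then 1 else 0))" for w
    have sub: "Sdeg n (Suc e) d \<subseteq> (\<Union>w\<in>W. insert {v,w} ` Sdeg n e (d' w))"
    proof
      fix F assume F: "F \<in> Sdeg n (Suc e) d"
      then have Fsub: "F \<subseteq> all_pairs n" and cF: "card F = Suc e"
        and dF: "\<And>u. u<n \<Longrightarrow> deg F u = d u" unfolding Sdeg_def by auto
      have finF: "finite F" using finite_subset[OF Fsub finite_all_pairs] .
      have "deg F v > 0" using dF v by auto
      then obtain x where x: "x \<in> F" "v \<in> x" unfolding deg_def
        by (metis (mono_tags, lifting) card.empty empty_Collect_eq less_irrefl)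
      then have "x \<in> all_pairs n" using Fsub by auto
      then obtain w where w: "x = {v,w}" "w \<noteq> v" "w < n"
        unfolding all_pairs_def using x(2) by (auto simp: card_2_iff doubleton_eq_iff)
      have "deg F w > 0" unfolding deg_def using x w finF
        by (subst card_gt_0_iff) auto
      then have wW: "w \<in> W" unfolding W_def using w dF by auto
      define F' where "F' = F - {x}"
      have "F' \<in> Sdeg n e (d' w)"
        unfolding Sdeg_def
      proof (intro CollectI conjI allI impI)
        show "F' \<subseteq> all_pairs n" using Fsub F'_def by auto
        show "card F' = e" using cF x finF F'_def by simp
        fix u assume u: "u < n"
        have "{y\<in>F'. u\<in>y} = {y\<in>F. u\<in>y} - (if u \<in> x then {x} else {})"
          using F'_def by auto
        then have "deg F' u = deg F u - (if u \<in> x then 1 else 0)"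
          unfolding deg_def using finF x by (auto simp: card_Diff_singleton)
        then show "deg F' u = d' w u" using dF[OF u] w unfolding d'_def by auto
      qed
      moreover have "F = insert {v,w} F'" using F'_def x w by auto
      ultimately show "F \<in> (\<Union>w\<in>W. insert {v,w} ` Sdeg n e (d' w))" using wW by blast
    qed
    have finW: "finite W" unfolding W_def by auto
    have "card (Sdeg n (Suc e) d) \<le> card (\<Union>w\<in>W. insert {v,w} ` Sdeg n e (d' w))"
      using sub finW by (intro card_mono) auto
    also have "\<dots> \<le> (\<Sum>w\<in>W. card (insert {v,w} ` Sdeg n e (d' w)))"
      by (rule card_UN_le[OF finW])
    also have "\<dots> \<le> (\<Sum>w\<in>W. card (Sdeg n e (d' w)))"
      by (intro sum_mono card_image_le) auto
    also have "\<dots> \<le> (\<Sum>w\<in>W. 2^e * fact e)"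
      by (intro sum_mono Suc.IH)
    also have "\<dots> = card W * (2^e * fact e)" by simp
    also have "card W \<le> 2 * Suc e"
    proof -
      have "W \<subseteq> \<Union>F0"
      proof
        fix w assume "w \<in> W"
        then have "deg F0 w > 0" using dF0 unfolding W_def by auto
        then show "w \<in> \<Union>F0" unfolding deg_def
          by (metis (mono_tags, lifting) UnionI card.empty empty_Collect_eq less_irrefl)
      qed
      then have "card W \<le> card (\<Union>F0)"
        using finF0 F0sub by (intro card_mono) (auto simp: all_pairs_def intro: finite_subset)
      also have "\<dots> \<le> sum card F0" by (rule card_Union_le_sum_card)
      also have "\<dots> = sum (\<lambda>_. 2) F0"
        using F0sub by (intro sum.cong) (auto simp: all_pairs_def)
      also have "\<dots> = 2 * Suc e" using cF0 by simp
      finally show ?thesis .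
    qed
    then have "card W * (2^e * fact e) \<le> 2 * Suc e * (2^e * fact e)" by (rule mult_right_mono) simp
    also have "\<dots> = 2^Suc e * fact (Suc e)" by (simp add: fact_Suc algebra_simps)
    finally show ?thesis by simp
  qed
qed


lemma finite_k_factors[simp]: "finite (k_factors n k)"
  unfolding k_factors_def is_k_factor_def
  by (rule finite_subset[of _ "Pow (all_pairs n)"]) auto

lemma deg_sum: "finite H \<Longrightarrow> deg H v = (\<Sum>x\<in>H. if v \<in> x then 1 else 0)"
  unfolding deg_def by (simp add: sum.inter_filter[symmetric])

lemma handshake:
  assumes "H \<in> k_factors n k"
  shows "2 * card H = k * n"
proof -
  have Hs: "H \<subseteq> all_pairs n" and dH: "\<And>v. v\<in>{0..<n} \<Longrightarrow> deg H v = k"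
    using assms unfolding k_factors_def is_k_factor_def deg_def by auto
  have finH: "finite H" using finite_subset[OF Hs finite_all_pairs] .
  have "k * n = (\<Sum>v\<in>{0..<n}. deg H v)" using dH by simp
  also have "\<dots> = (\<Sum>v\<in>{0..<n}. \<Sum>x\<in>H. if v \<in> x then 1 else 0)"
    using finH by (simp add: deg_sum)
  also have "\<dots> = (\<Sum>x\<in>H. \<Sum>v\<in>{0..<n}. if v \<in> x then 1 else 0)"
    by (rule sum.swap)
  also have "\<dots> = (\<Sum>x\<in>H. card {v\<in>{0..<n}. v \<in> x})"
    by (intro sum.cong refl) (simp add: sum.inter_filter[symmetric])
  also have "\<dots> = (\<Sum>x\<in>H. 2)"
  proof (intro sum.cong refl)
    fix x assume "x \<in> H"
    then have "x \<subseteq> {0..<n}" "card x = 2" using Hs unfolding all_pairs_def by auto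
    moreover from this have "{v\<in>{0..<n}. v \<in> x} = x" by auto
    ultimately show "card {v\<in>{0..<n}. v \<in> x} = 2" by simp
  qed
  also have "\<dots> = 2 * card H" by simp
  finally show ?thesis by simp
qed

lemma deg_split: "finite H \<Longrightarrow> deg (H - B) v + deg (H \<inter> B) v = deg H v"
proof -
  assume f: "finite H"
  have "{x\<in>H. v\<in>x} = {x\<in>H - B. v\<in>x} \<union> {x\<in>H \<inter> B. v\<in>x}" by auto
  moreover have "card ({x\<in>H - B. v\<in>x} \<union> {x\<in>H \<inter> B. v\<in>x}) =
      card {x\<in>H - B. v\<in>x} + card {x\<in>H \<inter> B. v\<in>x}"
    using f by (intro card_Un_disjoint) auto
  ultimately show ?thesis unfolding deg_def by simp
qed

lemma count_A:
  assumes Hs: "Hs \<in> k_factors n k" and l: "l \<le> k * n div 2" and ev: "even (k * n)"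
  shows "card {H\<in>k_factors n k. card (H \<inter> Hs) = l} \<le> (n * k) ^ (k * n div 2 - l)"
proof -
  define m where "m = k * n div 2"
  define e where "e = m - l"
  define A where "A = {H\<in>k_factors n k. card (H \<inter> Hs) = l}"
  have cardH: "\<And>H. H \<in> k_factors n k \<Longrightarrow> card H = m"
    using handshake ev unfolding m_def by fastforce
  have subH: "\<And>H. H \<in> k_factors n k \<Longrightarrow> H \<subseteq> all_pairs n"
    unfolding k_factors_def is_k_factor_def by auto
  have degH: "\<And>H v. H \<in> k_factors n k \<Longrightarrow> v < n \<Longrightarrow> deg H v = k"
    unfolding k_factors_def is_k_factor_def deg_def by auto
  have finHs: "finite Hs" using finite_subset[OF subH[OF Hs] finite_all_pairs] .
  define Dset where "Dset = {D. D \<subseteq> Hs \<and> card D = e}"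
  define \<phi> where "\<phi> H = (Hs - H, H - Hs)" for H
  have inj: "inj_on \<phi> A"
  proof (rule inj_onI)
    fix H1 H2 assume "H1 \<in> A" "H2 \<in> A" "\<phi> H1 = \<phi> H2"
    then have "Hs - H1 = Hs - H2" "H1 - Hs = H2 - Hs" unfolding \<phi>_def by auto
    then show "H1 = H2" by blast
  qed
  have img: "\<phi> ` A \<subseteq> Sigma Dset (\<lambda>D. Sdeg n e (deg D))"
  proof
    fix y assume "y \<in> \<phi> ` A"
    then obtain H where H: "H \<in> k_factors n k" "card (H \<inter> Hs) = l" and y: "y = \<phi> H"
      unfolding A_def by auto
    have finH: "finite H" using finite_subset[OF subH[OF H(1)] finite_all_pairs] .
    have c1: "card (Hs - H) = e"
      using H cardH[OF Hs] finHs unfolding e_def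
      by (metis card_Diff_subset_Int Int_commute finite_Int)
    have c2: "card (H - Hs) = e"
      using H cardH[OF H(1)] finH unfolding e_def
      by (metis card_Diff_subset_Int finite_Int)
    have "H - Hs \<in> Sdeg n e (deg (Hs - H))"
      unfolding Sdeg_def
    proof (intro CollectI conjI allI impI)
      show "H - Hs \<subseteq> all_pairs n" using subH[OF H(1)] by auto
      show "card (H - Hs) = e" by (rule c2)
      fix v assume v: "v < n"
      have "deg (H - Hs) v + deg (H \<inter> Hs) v = k"
        using deg_split[OF finH] degH[OF H(1) v] by simp
      moreover have "deg (Hs - H) v + deg (Hs \<inter> H) v = k"
        using deg_split[OF finHs] degH[OF Hs v] by simp
      moreover have "Hs \<inter> H = H \<inter> Hs" by auto
      ultimately show "deg (H - Hs) v = deg (Hs - H) v" by simp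
    qed
    moreover have "Hs - H \<in> Dset" unfolding Dset_def using c1 by auto
    ultimately show "y \<in> Sigma Dset (\<lambda>D. Sdeg n e (deg D))" using y unfolding \<phi>_def by auto
  qed
  have finD: "finite Dset" unfolding Dset_def using finHs by auto
  have "card A = card (\<phi> ` A)" using inj by (simp add: card_image)
  also have "\<dots> \<le> card (Sigma Dset (\<lambda>D. Sdeg n e (deg D)))"
    using img finD by (intro card_mono) auto
  also have "\<dots> = (\<Sum>D\<in>Dset. card (Sdeg n e (deg D)))"
    using finD by (simp add: card_SigmaI)
  also have "\<dots> \<le> (\<Sum>D\<in>Dset. 2^e * fact e)"
    by (intro sum_mono card_Sdeg)
  also have "\<dots> = card Dset * 2^e * fact e" by simp
  also have "card Dset = m choose e"
    unfolding Dset_def using n_subsets[OF finHs, of e] cardH[OF Hs] by simp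
  also have "(m choose e) * 2^e * fact e = ((m choose e) * fact e) * 2^e" by simp
  also have "\<dots> \<le> m^e * 2^e" by (intro mult_right_mono binomial_fact_pow) simp
  also have "\<dots> = (2*m)^e" by (simp add: power_mult_distrib)
  also have "2 * m = n * k" unfolding m_def using ev by simp
  finally show ?thesis unfolding A_def e_def m_def .
qed

lemma prob_gnp:
  assumes B: "B \<subseteq> all_pairs n" and p: "0 \<le> p" "p \<le> 1"
  shows "measure_pmf.prob (gnp n p) {G. B \<subseteq> G} = p ^ card B"
proof -
  have "(\<lambda>X. {e \<in> all_pairs n. X e}) -` {G. B \<subseteq> G} =
        Pi (all_pairs n) (\<lambda>a. if a \<in> B then {True} else UNIV)"
    using B by (auto simp: Pi_def)
  then have "measure_pmf.prob (gnp n p) {G. B \<subseteq> G} =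
    measure_pmf.prob (Pi_pmf (all_pairs n) False (\<lambda>_. bernoulli_pmf p))
       (Pi (all_pairs n) (\<lambda>a. if a \<in> B then {True} else UNIV))"
    unfolding gnp_def by simp
  also have "\<dots> = (\<Prod>a\<in>all_pairs n. measure_pmf.prob (bernoulli_pmf p) (if a \<in> B then {True} else UNIV))"
    by (rule measure_Pi_pmf_Pi) simp
  also have "\<dots> = (\<Prod>a\<in>all_pairs n. if a \<in> B then p else 1)"
    by (intro prod.cong refl) (use p in \<open>auto simp: measure_pmf_single\<close>)
  also have "\<dots> = (\<Prod>a\<in>{a\<in>all_pairs n. a \<in> B}. p)"
    by (simp add: prod.inter_filter[symmetric] del: prod_constant)
  also have "{a\<in>all_pairs n. a \<in> B} = B" using B by auto
  finally show ?thesis by simp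
qed


lemma set_gnp: "set_pmf (gnp n p) \<subseteq> Pow (all_pairs n)"
  unfolding gnp_def by auto

lemma inner:
  assumes Hs: "Hs \<in> k_factors n k" and l: "l \<le> k * n div 2" and ev: "even (k * n)"
    and p: "0 \<le> p" "p \<le> 1"
  shows "measure_pmf.expectation (gnp n p) (\<lambda>G0. real (Z_count n k l Hs (G0 \<union> Hs)))
         \<le> (real n * real k * p) ^ (k * n div 2 - l)"
proof -
  define m where "m = k * n div 2"
  define A where "A = {H\<in>k_factors n k. card (H \<inter> Hs) = l}"
  have finA: "finite A" unfolding A_def by simp
  have cardH: "\<And>H. H \<in> k_factors n k \<Longrightarrow> card H = m"
    using handshake ev unfolding m_def by fastforce
  have subH: "\<And>H. H \<in> k_factors n k \<Longrightarrow> H \<subseteq> all_pairs n"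
    unfolding k_factors_def is_k_factor_def by auto
  have Z: "real (Z_count n k l Hs (G0 \<union> Hs)) = (\<Sum>H\<in>A. indicator {G. H - Hs \<subseteq> G} G0)" for G0
  proof -
    have "Z_count n k l Hs (G0 \<union> Hs) = card {H\<in>A. H - Hs \<subseteq> G0}"
      unfolding Z_count_def A_def by (rule arg_cong[where f=card]) auto
    also have "\<dots> = (\<Sum>H\<in>A. if H - Hs \<subseteq> G0 then 1 else 0)"
      using finA by (simp add: sum.inter_filter[symmetric])
    finally have "real (Z_count n k l Hs (G0 \<union> Hs)) = (\<Sum>H\<in>A. real (if H - Hs \<subseteq> G0 then 1 else 0))"
      by (simp only: of_nat_sum)
    also have "\<dots> = (\<Sum>H\<in>A. indicator {G. H - Hs \<subseteq> G} G0)"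
      by (intro sum.cong refl) (simp add: indicator_def)
    finally show ?thesis .
  qed
  have "measure_pmf.expectation (gnp n p) (\<lambda>G0. real (Z_count n k l Hs (G0 \<union> Hs)))
      = measure_pmf.expectation (gnp n p) (\<lambda>G0. \<Sum>H\<in>A. indicator {G. H - Hs \<subseteq> G} G0)"
    by (simp add: Z)
  also have "\<dots> = (\<Sum>H\<in>A. measure_pmf.expectation (gnp n p) (indicator {G. H - Hs \<subseteq> G}))"
    by (rule Bochner_Integration.integral_sum)
       (rule measure_pmf.integrable_const_bound[where B=1], auto)
  also have "\<dots> = (\<Sum>H\<in>A. measure_pmf.prob (gnp n p) {G. H - Hs \<subseteq> G})" by simp
  also have "\<dots> = (\<Sum>H\<in>A. p ^ (m - l))"
  proof (intro sum.cong refl)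
    fix H assume H: "H \<in> A"
    then have Hk: "H \<in> k_factors n k" and cl: "card (H \<inter> Hs) = l" unfolding A_def by auto
    have finH: "finite H" using finite_subset[OF subH[OF Hk] finite_all_pairs] .
    have "card (H - Hs) = m - l"
      using cl cardH[OF Hk] finH by (metis card_Diff_subset_Int finite_Int)
    moreover have "H - Hs \<subseteq> all_pairs n" using subH[OF Hk] by auto
    ultimately show "measure_pmf.prob (gnp n p) {G. H - Hs \<subseteq> G} = p ^ (m - l)"
      using prob_gnp p by simp
  qed
  also have "\<dots> = real (card A) * p ^ (m - l)" by simp
  also have "\<dots> \<le> real ((n * k) ^ (m - l)) * p ^ (m - l)"
    using count_A[OF Hs l ev] p unfolding A_def m_def
    by (intro mult_right_mono) (simp_all only: of_nat_le_iff zero_le_power)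
  also have "\<dots> = (real n * real k * p) ^ (m - l)" by (simp add: power_mult_distrib)
  finally show ?thesis unfolding m_def .
qed

theorem mainTheorem12:
  fixes n k l :: nat and p :: real
  assumes "k \<ge> 1" and "even (k * n)"
    and "k_factors n k \<noteq> {}"
    and "0 \<le> p" and "p \<le> 1"
    and "l \<le> k * n div 2"
  shows "measure_pmf.expectation (planted_pmf n k p)
           (\<lambda>(Hs, G0). real (Z_count n k l Hs (G0 \<union> Hs)))
         \<le> (real n * real k * p) ^ (k * n div 2 - l)"
proof -
  define K where "K = k_factors n k"
  define S where "S = Pow (all_pairs n)"
  define f where "f = (\<lambda>(Hs, G0). real (Z_count n k l Hs (G0 \<union> Hs)))"
  define c where "c = (real n * real k * p) ^ (k * n div 2 - l)"
  have finK: "finite K" "K \<noteq> {}" using assms unfolding K_def by auto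
  have finS: "finite S" unfolding S_def by simp
  have E: "measure_pmf.expectation (gnp n p) g = (\<Sum>G\<in>S. g G * pmf (gnp n p) G)" for g :: "_ \<Rightarrow> real"
    by (rule integral_measure_pmf_real[OF finS]) (use set_gnp in \<open>auto simp: S_def\<close>)
  have "measure_pmf.expectation (planted_pmf n k p) f = (\<Sum>x\<in>K \<times> S. f x * pmf (planted_pmf n k p) x)"
    by (rule integral_measure_pmf_real) (use finK finS set_gnp in \<open>auto simp: planted_pmf_def K_def S_def\<close>)
  also have "\<dots> = (\<Sum>Hs\<in>K. \<Sum>G\<in>S. f (Hs, G) * (pmf (pmf_of_set K) Hs * pmf (gnp n p) G))"
    apply (subst sum.cartesian_product)
    by (intro sum.cong refl) (auto simp: planted_pmf_def pmf_pair K_def split: prod.split)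
  also have "\<dots> = (\<Sum>Hs\<in>K. pmf (pmf_of_set K) Hs * measure_pmf.expectation (gnp n p) (\<lambda>G. f (Hs, G)))"
    by (simp add: E sum_distrib_left algebra_simps)
  also have "\<dots> \<le> (\<Sum>Hs\<in>K. pmf (pmf_of_set K) Hs * c)"
  proof (intro sum_mono mult_left_mono)
    fix Hs assume "Hs \<in> K"
    then show "measure_pmf.expectation (gnp n p) (\<lambda>G. f (Hs, G)) \<le> c"
      using inner[of Hs n k l p] assms unfolding f_def c_def K_def by simp
  qed simp
  also have "\<dots> = c" using finK by simp
  finally show ?thesis unfolding f_def c_def .
qed

end
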